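(* Let $V,W$ be real vector spaces and let $g:V\times W\to\mathbb{R}$ be given by $$g(v,w)=\sigma(v)+2p(v,w)-\mu(w)-2f(v)+2h(w)+r,$$ where $\sigma:V\to\mathbb{R}$ and $\mu:W\to\mathbb{R}$ are positive definite quadratic forms, $p:V\times W\to\mathbb{R}$ is bilinear, $f:V\to\mathbb{R}$ and $h:W\to\mathbb{R}$ are linear, and $r\in\mathbb{R}$. Assume: (i) there exists $c\ge0$ such that $c^2\sigma(v)\mu(w)\ge|p(v,w)|^2$ for all $v\in V$, $w\in W$; (ii) $\inf_{v\in V}g(v,0)>-\infty$ and $\sup_{w\in W}g(0,w)<+\infty$. Then (a) $\inf_{v\in V}\sup_{w\in W}g(v,w)=\sup_{w\in W}\inf_{v\in V}g(v,w)$; and (b) there exists $c_1\ge0$ such that $\inf_{v\in V}g(v,w)\ge-c_1(1+\mu(w))$ for all $w\in W$ and $\sup_{w\in W}g(v,w)\le c_1(1+\sigma(v))$ for all $v\in V$.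
   Context: A quadratic form on a real vector space $V$ is a function $\sigma(v)=b(v,v)$ with $b$ symmetric bilinear; it is positive definite if $\sigma(v)>0$ for all $v\ne0$. *)

theory Defs
  imports "HOL-Analysis.Analysis"
begin

definition quadratic_form :: "('a::real_vector \<Rightarrow> real) \<Rightarrow> bool" where
  "quadratic_form q \<longleftrightarrow>
     (\<exists>b :: 'a \<Rightarrow> 'a \<Rightarrow> real. bilinear b \<and> (\<forall>x y. b x y = b y x) \<and> (\<forall>v. q v = b v v))"

definition pos_def_quadratic_form :: "('a::real_vector \<Rightarrow> real) \<Rightarrow> bool" where
  "pos_def_quadratic_form q \<longleftrightarrow> quadratic_form q \<and> (\<forall>v. v \<noteq> 0 \<longrightarrow> q v > 0)"

end

theory Submission
  imports Defs
begin

lemma qbound: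
  fixes a b q c t :: real
  assumes "0 \<le> a" "0 \<le> b" "q\<^sup>2 \<le> c\<^sup>2 * a * b"
  shows "a / 2 + 2 * t * q \<ge> - 2 * t\<^sup>2 * c\<^sup>2 * b"
proof -
  have "(-2*t*q)\<^sup>2 \<le> (a/2 + 2 * t\<^sup>2 * c\<^sup>2 * b)\<^sup>2"
  proof -
    have "(-2*t*q)\<^sup>2 = 4 * t\<^sup>2 * q\<^sup>2" by (simp add: power2_eq_square)
    also have "\<dots> \<le> 4 * t\<^sup>2 * (c\<^sup>2 * a * b)" using assms(3) by (simp add: mult_left_mono)
    also have "\<dots> \<le> (a/2 + 2 * t\<^sup>2 * c\<^sup>2 * b)\<^sup>2"
      using zero_le_power2[of "a/2 - 2 * t\<^sup>2 * c\<^sup>2 * b"]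
      by (simp add: power2_eq_square algebra_simps)
    finally show ?thesis .
  qed
  moreover have "0 \<le> a/2 + 2 * t\<^sup>2 * c\<^sup>2 * b" using assms by simp
  ultimately have "-2*t*q \<le> a/2 + 2 * t\<^sup>2 * c\<^sup>2 * b" by (rule power2_le_imp_le)
  then show ?thesis by simp
qed

theorem theorem3p2:
  fixes \<sigma> :: "'v::real_vector \<Rightarrow> real"
    and \<mu> :: "'w::real_vector \<Rightarrow> real"
    and p :: "'v \<Rightarrow> 'w \<Rightarrow> real"
    and f :: "'v \<Rightarrow> real" and h :: "'w \<Rightarrow> real" and r :: real
    and g :: "'v \<Rightarrow> 'w \<Rightarrow> real"
  assumes g_def: "\<And>v w. g v w = \<sigma> v + 2 * p v w - \<mu> w - 2 * f v + 2 * h w + r"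
    and sigma: "pos_def_quadratic_form \<sigma>"
    and mu: "pos_def_quadratic_form \<mu>"
    and p: "bilinear p"
    and f: "linear f"
    and h: "linear h"
    and i: "\<exists>c\<ge>0. \<forall>v w. c\<^sup>2 * \<sigma> v * \<mu> w \<ge> \<bar>p v w\<bar>\<^sup>2"
    and ii1: "(INF v. ereal (g v 0)) > -\<infinity>"
    and ii2: "(SUP w. ereal (g 0 w)) < \<infinity>"
  shows "(INF v. SUP w. ereal (g v w)) = (SUP w. INF v. ereal (g v w)) \<and>
         (\<exists>c1\<ge>0. (\<forall>w. (INF v. ereal (g v w)) \<ge> ereal (- c1 * (1 + \<mu> w))) \<and>
                 (\<forall>v. (SUP w. ereal (g v w)) \<le> ereal (c1 * (1 + \<sigma> v))))"
proof -
  obtain bs where bs: "bilinear bs" "\<And>x y. bs x y = bs y x" "\<And>v. \<sigma> v = bs v v"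
    using sigma unfolding pos_def_quadratic_form_def quadratic_form_def by blast
  obtain bm where bm: "bilinear bm" "\<And>x y. bm x y = bm y x" "\<And>v. \<mu> v = bm v v"
    using mu unfolding pos_def_quadratic_form_def quadratic_form_def by blast
  have sig0: "\<sigma> v \<ge> 0" for v
  proof (cases "v = 0")
    case True then show ?thesis using bs(1,3) by (simp add: bilinear_lzero)
  qed (use sigma in \<open>auto simp: pos_def_quadratic_form_def intro: less_imp_le\<close>)
  have mu0: "\<mu> w \<ge> 0" for w
  proof (cases "w = 0")
    case True then show ?thesis using bm(1,3) by (simp add: bilinear_lzero)
  qed (use mu in \<open>auto simp: pos_def_quadratic_form_def intro: less_imp_le\<close>)
  obtain c where c: "c \<ge> 0" "\<And>v w. \<bar>p v w\<bar>\<^sup>2 \<le> c\<^sup>2 * \<sigma> v * \<mu> w" using i by blast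
  have pb: "\<sigma> u / 2 + 2 * t * p u d \<ge> - 2 * t\<^sup>2 * c\<^sup>2 * \<mu> d" for u d t
    using qbound[of "\<sigma> u" "\<mu> d" "p u d" c t] sig0[of u] mu0[of d] c(2)[of u d] by simp
  have pb2: "\<mu> d / 2 + 2 * t * (- p u d) \<ge> - 2 * t\<^sup>2 * c\<^sup>2 * \<sigma> u" for u d t
    using qbound[of "\<mu> d" "\<sigma> u" "- p u d" c t] sig0[of u] mu0[of d] c(2)[of u d] by (simp add: mult_ac)
  have fl: "f (x+y) = f x + f y" "f (a *\<^sub>R x) = a * f x" for x y a using f by (simp_all add: linear_iff)
  have hl: "h (x+y) = h x + h y" "h (a *\<^sub>R x) = a * h x" for x y a using h by (simp_all add: linear_iff)
  have gscale: "g (a *\<^sub>R v) (b *\<^sub>R w) = a\<^sup>2 * \<sigma> v + 2 * a * b * p v w - b\<^sup>2 * \<mu> w - 2 * a * f v + 2 * b * h w + r"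
    for a b v w
    unfolding g_def bs(3) bm(3) fl hl using bs(1) bm(1) p
    by (simp add: bilinear_lmul bilinear_rmul power2_eq_square)
  have ident: "g (vb + u) (wb + t *\<^sub>R d) - g vb wb = 2 * (g (vb + (1/2) *\<^sub>R u) wb - g vb wb) + \<sigma> u / 2
        + 2 * t * p u d + t * (g vb (wb + d) - g vb wb + \<mu> d) - t^2 * \<mu> d" for vb u wb t d
  proof -
    have ss: "bs (vb + u) (vb+u) = bs vb vb + 2 * bs vb u + bs u u" 
       "bs (vb + (1/2) *\<^sub>R u) (vb + (1/2) *\<^sub>R u) = bs vb vb + bs vb u + bs u u / 4"
      using bs by (simp_all add: bilinear_ladd bilinear_radd bilinear_lmul bilinear_rmul)
    have mm: "bm (wb + t *\<^sub>R d) (wb + t *\<^sub>R d) = bm wb wb + 2 * t * bm wb d + t^2 * bm d d" 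
       "bm (wb + d) (wb + d) = bm wb wb + 2 * bm wb d + bm d d"
      using bm by (simp_all add: bilinear_ladd bilinear_radd bilinear_lmul bilinear_rmul power2_eq_square)
    have pp: "p (vb + u) (wb + t *\<^sub>R d) = p vb wb + t * p vb d + p u wb + t * p u d"
      "p (vb + (1/2) *\<^sub>R u) wb = p vb wb + p u wb / 2"
      "p vb (wb + d) = p vb wb + p vb d"
      using p by (simp_all add: bilinear_ladd bilinear_radd bilinear_lmul bilinear_rmul)
    show ?thesis unfolding g_def bs(3) bm(3) ss mm pp fl hl by (simp add: algebra_simps power2_eq_square)
  qed
  obtain m0 where m0: "\<And>v. m0 \<le> g v 0"
  proof -
    let ?I = "INF v. ereal (g v 0)"
    have "?I \<le> ereal (g 0 0)" by (rule INF_lower) simp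
    then obtain m where "?I = ereal m" using ii1 by (cases ?I) auto
    then show ?thesis using that[of m] by (metis INF_lower UNIV_I ereal_less_eq(3))
  qed
  obtain M0 where M0: "\<And>w. g 0 w \<le> M0"
  proof -
    let ?I = "SUP w. ereal (g 0 w)"
    have "ereal (g 0 0) \<le> ?I" by (rule SUP_upper) simp
    then obtain m where "?I = ereal m" using ii2 by (cases ?I) auto
    then show ?thesis using that[of m] by (metis SUP_upper UNIV_I ereal_less_eq(3))
  qed
  have cc: "0 \<le> c*(c*2)" using c(1) by simp
  define c1 where "c1 = 2 * c\<^sup>2 + 2 + 2 * \<bar>M0\<bar> + 2 * \<bar>m0\<bar>"
  have c1pos: "c1 \<ge> 0" unfolding c1_def by simp
  have lowb: "g v w \<ge> - c1 * (1 + \<mu> w)" for v w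
  proof -
    have a: "m0 \<le> g ((1/2) *\<^sub>R v) (0 *\<^sub>R w)" using m0[of "(1/2) *\<^sub>R v"] by simp
    have b: "g (0 *\<^sub>R v) ((-1) *\<^sub>R w) \<le> M0" using M0[of "(-1) *\<^sub>R w"] by simp
    have e: "(c1 - (2 * c\<^sup>2 + 2)) * \<mu> w \<ge> 0" using mu0[of w] unfolding c1_def by simp
    show ?thesis using a b e pb[where u=v and d=w and t=1] abs_ge_self[of M0] abs_ge_self[of m0] abs_ge_minus_self[of M0] abs_ge_minus_self[of m0] zero_le_square[of c] unfolding gscale g_def[of v w] unfolding c1_def
      by (simp add: power2_eq_square algebra_simps) (use sig0[of v] mu0[of w] cc in linarith)
  qed
  have upb: "g v w \<le> c1 * (1 + \<sigma> v)" for v w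
  proof -
    have a: "m0 \<le> g ((-1) *\<^sub>R v) (0 *\<^sub>R w)" using m0[of "(-1) *\<^sub>R v"] by simp
    have b: "g (0 *\<^sub>R v) ((1/2) *\<^sub>R w) \<le> M0" using M0[of "(1/2) *\<^sub>R w"] by simp
    have e: "(c1 - (2 * c\<^sup>2 + 2)) * \<sigma> v \<ge> 0" using sig0[of v] unfolding c1_def by simp
    show ?thesis using a b e pb2[where u=v and d=w and t=1] abs_ge_self[of M0] abs_ge_self[of m0] abs_ge_minus_self[of M0] abs_ge_minus_self[of m0] zero_le_square[of c] unfolding gscale g_def[of v w] unfolding c1_def
      by (simp add: power2_eq_square algebra_simps) (use sig0[of v] mu0[of w] cc in linarith)
  qed
  have partb: "\<exists>c1\<ge>0. (\<forall>w. (INF v. ereal (g v w)) \<ge> ereal (- c1 * (1 + \<mu> w))) \<and>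
                 (\<forall>v. (SUP w. ereal (g v w)) \<le> ereal (c1 * (1 + \<sigma> v)))"
    using c1pos lowb upb by (intro exI[of _ c1]) (auto intro!: INF_greatest SUP_least)
  define \<psi> where "\<psi> w = (INF v. ereal (g v w))" for w
  define s where "s = (SUP w. \<psi> w)"
  have psi_up: "\<psi> w \<le> ereal M0" for w
    unfolding \<psi>_def by (rule INF_lower2[of 0]) (auto intro: M0)
  have psi_low: "\<psi> w \<ge> ereal (- c1 * (1 + \<mu> w))" for w
    unfolding \<psi>_def using lowb by (auto intro!: INF_greatest)
  have "s \<le> ereal M0" unfolding s_def using psi_up by (auto intro!: SUP_least)
  moreover have "ereal (- c1 * (1 + \<mu> 0)) \<le> s" unfolding s_def
    using psi_low[of 0] by (rule order_trans) (rule SUP_upper, simp)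
  ultimately obtain s0 where s0: "s = ereal s0" by (cases s) auto
  have weak: "s \<le> (INF v. SUP w. ereal (g v w))"
    unfolding s_def \<psi>_def
    by (intro SUP_least INF_greatest) (meson INF_lower SUP_upper UNIV_I order_trans)
  have key: "\<And>w L. (\<And>v. L \<le> g v w) \<Longrightarrow> L \<le> s0"
  proof -
    fix w L assume "\<And>v. L \<le> g v w"
    then have "ereal L \<le> \<psi> w" unfolding \<psi>_def by (auto intro!: INF_greatest)
    also have "\<dots> \<le> s" unfolding s_def by (rule SUP_upper) simp
    finally show "L \<le> s0" using s0 by simp
  qed
  define K where "K = 2 * c\<^sup>2 + 1"
  have Kpos: "K \<ge> 1" unfolding K_def by simp
  have strong: "(INF v. SUP w. ereal (g v w)) \<le> s"
  proof (rule ereal_le_epsilon2)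
    fix e :: real assume e: "0 < e"
    define \<delta> where "\<delta> = e / (1 + 3 * K)"
    have dpos: "\<delta> > 0" unfolding \<delta>_def using e Kpos by simp
    have de: "\<delta> * (1 + 3 * K) = e" unfolding \<delta>_def using Kpos by simp
    have "ereal (s0 - \<delta>) < s" using s0 dpos by simp
    then obtain wb where wb: "ereal (s0 - \<delta>) < \<psi> wb" unfolding s_def by (auto simp: less_SUP_iff)
    have "\<psi> wb \<le> s" unfolding s_def by (rule SUP_upper) simp
    with wb s0 obtain q where q: "\<psi> wb = ereal q" by (cases "\<psi> wb") auto
    have qs: "q \<le> s0" "s0 - \<delta> < q" using wb q s0 \<open>\<psi> wb \<le> s\<close> by auto
    have "\<psi> wb < ereal (q + \<delta>)" using q dpos by simp
    then obtain vb where vb: "g vb wb < q + \<delta>" unfolding \<psi>_def by (auto simp: INF_less_iff)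
    have qlow: "q \<le> g v wb" for v
      using q unfolding \<psi>_def by (metis INF_lower UNIV_I ereal_less_eq(3))
    have bnd: "g vb w \<le> s0 + e" for w
    proof -
      define d where "d = w - wb"
      define t where "t = 1 / K"
      define \<Lambda> where "\<Lambda> = g vb (wb + d) - g vb wb + \<mu> d"
      define L where "L = g vb wb - 2 * \<delta> - t\<^sup>2 * K * \<mu> d + t * \<Lambda>"
      have "L \<le> g v (wb + t *\<^sub>R d)" for v
      proof -
        have id: "g (vb + (v - vb)) (wb + t *\<^sub>R d) - g vb wb = 2 * (g (vb + (1/2) *\<^sub>R (v - vb)) wb - g vb wb) + \<sigma> (v - vb) / 2
          + 2 * t * p (v - vb) d + t * \<Lambda> - t^2 * \<mu> d" unfolding \<Lambda>_def by (rule ident)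
        have "g (vb + (1/2) *\<^sub>R (v - vb)) wb - g vb wb \<ge> - \<delta>" using qlow[of "vb + (1/2) *\<^sub>R (v - vb)"] vb by simp
        with id pb[where u="v - vb" and d=d and t=t] show ?thesis unfolding L_def K_def by (simp add: algebra_simps)
      qed
      then have "L \<le> s0" by (rule key)
      then have "t * \<Lambda> \<le> 3 * \<delta> + t\<^sup>2 * K * \<mu> d" unfolding L_def using qlow[of vb] qs by simp
      then have "\<Lambda> / K \<le> 3 * \<delta> + \<mu> d / K" unfolding t_def using Kpos by (simp add: power2_eq_square field_simps)
      then have "\<Lambda> \<le> 3 * \<delta> * K + \<mu> d" using Kpos by (simp add: field_simps)
      then have "g vb w \<le> q + \<delta> + 3 * \<delta> * K" unfolding \<Lambda>_def d_def using vb by simp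
      then show ?thesis using qs de by (simp add: algebra_simps)
    qed
    have "(INF v. SUP w. ereal (g v w)) \<le> (SUP w. ereal (g vb w))" by (rule INF_lower) simp
    also have "\<dots> \<le> ereal (s0 + e)" using bnd by (auto intro!: SUP_least)
    finally show "(INF v. SUP w. ereal (g v w)) \<le> s + ereal e" using s0 by simp
  qed
  have "(INF v. SUP w. ereal (g v w)) = (SUP w. INF v. ereal (g v w))"
    using weak strong unfolding s_def \<psi>_def by simp
  with partb show ?thesis by blast
qed

end
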